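(* Let $\underline a=\{a_i\}_{i\in I}$ be a pseudo-Cauchy sequence in $K$ of algebraic type and let $F,G$ be two distinct monic polynomials of smallest degree among polynomials not fixed by $\underline a$. Then $\mu_{F,\infty}\neq\mu_{G,\infty}$.
   Context: $(K,v)$ is a valued field. A pseudo-Cauchy sequence is $\underline a=\{a_i\}_{i\in I}\subseteq K$, $I$ well-ordered with at least two elements, $v(a_i-a_j)<v(a_j-a_k)$ for $i<j<k$. $I^*=I\setminus\{\max I\}$ if $I$ has a maximum, else $I^*=I$. $\gamma_i=v(a_{i+1}-a_i)$ and $\nu_i=v_{a_i,\gamma_i}$ for $i\in I^*$, with $v_{a,\gamma}(\sum_k b_k(x-a)^k)=\min_k\{v(b_k)+k\gamma\}$. A polynomial $f$ is fixed by $\underline a$ if $\{v(f(a_i))\}_{i\in I}$ is ultimately constant; $\underline a$ is of algebraic type if $I^*$ has no maximum and some polynomial is not fixed by $\underline a$. For $F$ monic of smallest degree not fixed by $\underline a$ and $g$ with $\deg g<\deg F$, $\nu_i(g)$ is ultimately constant; call this value $\nu_{\mathfrak v}(g)$. Then $\mu_{F,\infty}(f)=\min_{0\le j\le r}\{\nu_{\mathfrak v}(f_j)+j\cdot\infty\}$, i.e. $\mu_{F,\infty}(f)=\nu_{\mathfrak v}(f_0)$, where $f=\sum_{j=0}^r f_jF^j$ with $\deg f_j<\deg F$ is the $F$-expansion of $f$; it is a valuation on $K[x]$ with $\mu_{F,\infty}(F)=\infty$. *)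

theory Defs
  imports "HOL-Computational_Algebra.Polynomial" "HOL-Library.Extended"
begin

definition valuation :: "('k::field \<Rightarrow> 'g::linordered_ab_group_add extended) \<Rightarrow> bool" where
  "valuation v \<longleftrightarrow>
     (\<forall>x. v x \<noteq> Minf) \<and>
     (\<forall>x. v x = Pinf \<longleftrightarrow> x = 0) \<and>
     (\<forall>x y. v (x * y) = v x + v y) \<and>
     (\<forall>x y. min (v x) (v y) \<le> v (x + y))"

definition pseudo_cauchy ::
  "('k::field \<Rightarrow> 'g::linordered_ab_group_add extended) \<Rightarrow> ('i::wellorder) set \<Rightarrow> ('i \<Rightarrow> 'k) \<Rightarrow> bool" where
  "pseudo_cauchy v I a \<longleftrightarrow>
     (\<exists>i\<in>I. \<exists>j\<in>I. i \<noteq> j) \<and>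
     (\<forall>i\<in>I. \<forall>j\<in>I. \<forall>k\<in>I. i < j \<longrightarrow> j < k \<longrightarrow> v (a i - a j) < v (a j - a k))"

text \<open>I* = I minus its maximum (if any): exactly the elements having a larger element in I.\<close>

definition Istar :: "('i::wellorder) set \<Rightarrow> 'i set" where
  "Istar I = {i\<in>I. \<exists>j\<in>I. i < j}"

definition isucc :: "('i::wellorder) set \<Rightarrow> 'i \<Rightarrow> 'i" where
  "isucc I i = (LEAST j. j \<in> I \<and> i < j)"

definition nat_scale :: "nat \<Rightarrow> 'g::comm_monoid_add \<Rightarrow> 'g" where
  "nat_scale k \<gamma> = (\<Sum>_<k. \<gamma>)"

text \<open>Monomial valuation v_{a,gamma}(\<Sum> b_k (x-a)^k) = min_k (v b_k + k\<gamma>);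
  the b_k are the coefficients of f(x+a).\<close>

definition vmono ::
  "('k::field \<Rightarrow> 'g::linordered_ab_group_add extended) \<Rightarrow> 'k \<Rightarrow> 'g extended \<Rightarrow> 'k poly \<Rightarrow> 'g extended" where
  "vmono v a \<gamma> f =
     Min ((\<lambda>k. v (coeff (pcompose f [:a, 1:]) k) + nat_scale k \<gamma>) ` {..degree f})"

definition gam :: "('k::field \<Rightarrow> 'g::linordered_ab_group_add extended) \<Rightarrow> ('i::wellorder) set \<Rightarrow> ('i \<Rightarrow> 'k) \<Rightarrow> 'i \<Rightarrow> 'g extended" where
  "gam v I a i = v (a (isucc I i) - a i)"

definition nu_i :: "('k::field \<Rightarrow> 'g::linordered_ab_group_add extended) \<Rightarrow> ('i::wellorder) set \<Rightarrow> ('i \<Rightarrow> 'k) \<Rightarrow> 'i \<Rightarrow> 'k poly \<Rightarrow> 'g extended" where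
  "nu_i v I a i = vmono v (a i) (gam v I a i)"

definition fixed_by ::
  "('k::field \<Rightarrow> 'g::linordered_ab_group_add extended) \<Rightarrow> ('i::wellorder) set \<Rightarrow> ('i \<Rightarrow> 'k) \<Rightarrow> 'k poly \<Rightarrow> bool" where
  "fixed_by v I a f \<longleftrightarrow>
     (\<exists>i0\<in>I. \<forall>i\<in>I. i0 \<le> i \<longrightarrow> v (poly f (a i)) = v (poly f (a i0)))"

definition algebraic_type ::
  "('k::field \<Rightarrow> 'g::linordered_ab_group_add extended) \<Rightarrow> ('i::wellorder) set \<Rightarrow> ('i \<Rightarrow> 'k) \<Rightarrow> bool" where
  "algebraic_type v I a \<longleftrightarrow>
     (\<not> (\<exists>m\<in>Istar I. \<forall>i\<in>Istar I. i \<le> m)) \<and> (\<exists>f. \<not> fixed_by v I a f)"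

definition min_unfixed ::
  "('k::field \<Rightarrow> 'g::linordered_ab_group_add extended) \<Rightarrow> ('i::wellorder) set \<Rightarrow> ('i \<Rightarrow> 'k) \<Rightarrow> 'k poly \<Rightarrow> bool" where
  "min_unfixed v I a F \<longleftrightarrow>
     lead_coeff F = 1 \<and> \<not> fixed_by v I a F \<and>
     (\<forall>g. \<not> fixed_by v I a g \<longrightarrow> degree F \<le> degree g)"

text \<open>The ultimate value of \<nu>_i(g), i \<in> I* (for deg g < deg F this value exists).\<close>

definition nu_lim ::
  "('k::field \<Rightarrow> 'g::linordered_ab_group_add extended) \<Rightarrow> ('i::wellorder) set \<Rightarrow> ('i \<Rightarrow> 'k) \<Rightarrow> 'k poly \<Rightarrow> 'g extended" where
  "nu_lim v I a g =
     (THE c. \<exists>i0\<in>Istar I. \<forall>i\<in>Istar I. i0 \<le> i \<longrightarrow> nu_i v I a i g = c)"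

text \<open>j-th coefficient of the F-expansion f = \<Sum> f_j F^j with deg f_j < deg F.\<close>

definition Fexp :: "'k::field poly \<Rightarrow> 'k poly \<Rightarrow> nat \<Rightarrow> 'k poly" where
  "Fexp F f j = (f div F ^ j) mod F"

text \<open>\<mu>_{F,\<infinity>}(f) = min_j (\<nu>(f_j) + j\<cdot>\<infinity>) = \<nu>(f_0).\<close>

definition mu_inf ::
  "('k::field \<Rightarrow> 'g::linordered_ab_group_add extended) \<Rightarrow> ('i::wellorder) set \<Rightarrow> ('i \<Rightarrow> 'k) \<Rightarrow> 'k poly \<Rightarrow> 'k poly \<Rightarrow> 'g extended" where
  "mu_inf v I a F f = nu_lim v I a (Fexp F f 0)"

end

theory Submission
  imports Defs
begin

lemma nu_lim_const:
  assumes "\<exists>i. i \<in> Istar I" and "\<And>i. i \<in> Istar I \<Longrightarrow> nu_i v I a i g = c"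
  shows "nu_lim v I a g = c"
  unfolding nu_lim_def
proof (rule the_equality)
  from assms(1) obtain i where "i \<in> Istar I" by blast
  then show "\<exists>i0\<in>Istar I. \<forall>i\<in>Istar I. i0 \<le> i \<longrightarrow> nu_i v I a i g = c" using assms(2) by blast
next
  fix c' assume "\<exists>i0\<in>Istar I. \<forall>i\<in>Istar I. i0 \<le> i \<longrightarrow> nu_i v I a i g = c'"
  then obtain i0 where "i0 \<in> Istar I" "nu_i v I a i0 g = c'" by blast
  with assms(2) show "c' = c" by metis
qed

lemma nu_i_zero: "nu_i v I a i 0 = v 0"
  unfolding nu_i_def vmono_def nat_scale_def by (simp add: zero_extended_def[symmetric])

lemma nu_i_const: "nu_i v I a i [:c:] = v c"
  unfolding nu_i_def vmono_def nat_scale_def by simp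

lemma nu_i_one: "nu_i v I a i 1 = v 1"
  unfolding nu_i_def vmono_def nat_scale_def by simp

lemma valuation_one:
  fixes v :: "'k::field \<Rightarrow> 'g::linordered_ab_group_add extended"
  assumes "valuation v" shows "v 1 = 0"
proof -
  have m: "v 1 = v 1 + v 1" using assms unfolding valuation_def by (metis mult_1)
  have "v 1 \<noteq> Minf" "v 1 \<noteq> Pinf" using assms unfolding valuation_def by auto
  then obtain g where g: "v 1 = Fin g" by (cases "v 1") auto
  with m have "g = g + g" by simp
  then have "g = 0" by (metis add_cancel_left_right)
  with g show ?thesis by (simp add: zero_extended_def)
qed

lemma fixed_mult:
  assumes "fixed_by v I a P" "fixed_by v I a Q" "valuation v"
  shows "fixed_by v I a (P * Q)"
proof -
  obtain i0 where i0: "i0 \<in> I" "\<forall>i\<in>I. i0 \<le> i \<longrightarrow> v (poly P (a i)) = v (poly P (a i0))"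
    using assms(1) unfolding fixed_by_def by blast
  obtain i1 where i1: "i1 \<in> I" "\<forall>i\<in>I. i1 \<le> i \<longrightarrow> v (poly Q (a i)) = v (poly Q (a i1))"
    using assms(2) unfolding fixed_by_def by blast
  define m where "m = max i0 i1"
  have mI: "m \<in> I" using i0 i1 unfolding m_def by (simp add: max_def)
  have vm: "\<And>x y. v (x * y) = v x + v y" using assms(3) unfolding valuation_def by blast
  show ?thesis unfolding fixed_by_def
  proof (intro bexI[OF _ mI] ballI impI)
    fix i
    assume mi: "m \<le> i" "i \<in> I"
    have "v (poly P (a i)) = v (poly P (a i0))" "v (poly Q (a i)) = v (poly Q (a i1))"
      "v (poly P (a m)) = v (poly P (a i0))" "v (poly Q (a m)) = v (poly Q (a i1))"
      using i0(2) i1(2) mi mI unfolding m_def by auto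
    then show "v (poly (P * Q) (a i)) = v (poly (P * Q) (a m))"
      by (simp only: poly_mult vm)
  qed
qed

lemma const_fixed: "I \<noteq> {} \<Longrightarrow> fixed_by v I a [:c:]"
  unfolding fixed_by_def by auto

theorem mainTheorem10:
  fixes v :: "'k::field \<Rightarrow> 'g::linordered_ab_group_add extended"
    and I :: "'i::wellorder set"
    and a :: "'i \<Rightarrow> 'k"
    and F G :: "'k poly"
  assumes "valuation v"
    and "pseudo_cauchy v I a"
    and "algebraic_type v I a"
    and "min_unfixed v I a F"
    and "min_unfixed v I a G"
    and "F \<noteq> G"
  shows "mu_inf v I a F \<noteq> mu_inf v I a G"
proof -
  obtain i j where ij: "i \<in> I" "j \<in> I" "i \<noteq> j" using assms(2) unfolding pseudo_cauchy_def by blast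
  have ne: "\<exists>i. i \<in> Istar I"
  proof (cases "i < j")
    case True then show ?thesis using ij unfolding Istar_def by blast
  next
    case False then have "j < i" using ij by auto
    then show ?thesis using ij unfolding Istar_def by blast
  qed
  have Ine: "I \<noteq> {}" using ij by auto
  have Fm: "lead_coeff F = 1" "\<not> fixed_by v I a F" "\<forall>g. \<not> fixed_by v I a g \<longrightarrow> degree F \<le> degree g"
    using assms(4) unfolding min_unfixed_def by auto
  have Gm: "lead_coeff G = 1" "\<not> fixed_by v I a G" "\<forall>g. \<not> fixed_by v I a g \<longrightarrow> degree G \<le> degree g"
    using assms(5) unfolding min_unfixed_def by auto
  have degeq: "degree F = degree G" using Fm Gm by (meson le_antisym)
  have small_fixed: "\<And>g. degree g < degree G \<Longrightarrow> fixed_by v I a g" using Gm by force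
  have dG: "degree G > 0"
  proof (rule ccontr)
    assume "\<not> degree G > 0"
    then obtain c where "G = [:c:]" by (metis degree0_coeffs gr0I)
    then show False using Gm(2) const_fixed[OF Ine] by auto
  qed
  define t where "t = F - G"
  have t0: "t \<noteq> 0" using assms(6) unfolding t_def by simp
  have "degree t \<le> degree G" unfolding t_def using degeq by (metis degree_diff_le order_refl)
  moreover have "coeff t (degree G) = 0" unfolding t_def using Fm Gm degeq by simp
  ultimately have dt: "degree t < degree G" using t0
    by (metis le_neq_implies_less leading_coeff_0_iff)
  have G0: "G \<noteq> 0" using dG by auto
  have key: "\<And>r h. degree r = n \<Longrightarrow> r \<noteq> 0 \<Longrightarrow> r = (F*h) mod G \<Longrightarrow>
       \<exists>h'. (F*h') mod G \<noteq> 0 \<and> degree ((F*h') mod G) = 0" for n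
  proof (induction n rule: less_induct)
    case (less n r h)
    show ?case
    proof (cases "n = 0")
      case True then show ?thesis using less.prems by blast
    next
      case False
      have rG: "degree r < degree G" using less.prems G0
        by (metis degree_mod_less)
      define q where "q = G div r"
      define s where "s = G mod r"
      have Gqs: "G = q * r + s" unfolding q_def s_def by simp
      have sdeg: "s = 0 \<or> degree s < degree r" unfolding s_def using less.prems(2)
        by (simp add: degree_mod_less)
      show ?thesis
      proof (cases "s = 0")
        case True
        then have Gq: "G = r * q" using Gqs by simp
        have q0: "q \<noteq> 0" using Gq G0 by auto
        have dsum: "degree G = degree r + degree q" using Gq q0 less.prems(2) by (simp add: degree_mult_eq)
        have "degree q < degree G" using False less.prems(1) dsum by simp
        then have "fixed_by v I a r" "fixed_by v I a q" using small_fixed rG by auto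
        then have "fixed_by v I a G" using Gq fixed_mult[OF _ _ assms(1)] by metis
        then show ?thesis using Gm by simp
      next
        case False
        define w where "w = (F*h) div G"
        have "w * G + r = F*h" using div_mult_mod_eq[of "F*h" G] less.prems(3) unfolding w_def by simp
        then have rw: "r = F*h - w * G" by (simp add: algebra_simps)
        have "s = G - q * r" using Gqs by simp
        also have "\<dots> = F * (- (q*h)) + (1 + q * w) * G" unfolding rw by (simp add: algebra_simps)
        finally have s1: "s = F * (- (q*h)) + (1 + q * w) * G" .
        have sG: "degree s < degree G" using sdeg False rG by auto
        have "s = s mod G" using sG by (simp add: mod_poly_less)
        also have "\<dots> = (F * (- (q*h))) mod G" unfolding s1 by (rule mod_mult_self1)
        finally have s2: "s = (F * (- (q*h))) mod G" .
        have "degree s < n" using sdeg False less.prems(1) by auto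
        from less.IH[OF this refl False s2] show ?thesis .
      qed
    qed
  qed
  have "t mod G = t" using dt by (simp add: mod_poly_less)
  moreover have "F * 1 = t + 1 * G" by (simp add: t_def)
  then have "(F * 1) mod G = t mod G" by (simp only: mod_mult_self1)
  ultimately have "t = (F * 1) mod G" by simp
  from key[OF refl t0 this] obtain h where h: "(F*h) mod G \<noteq> 0" "degree ((F*h) mod G) = 0" by blast
  then obtain c where c: "(F*h) mod G = [:c:]" by (metis degree0_coeffs)
  with h have c0: "c \<noteq> 0" by simp
  define f where "f = F * h"
  have fF: "f mod F = 0" unfolding f_def by simp
  have "mu_inf v I a F f = v 0"
    unfolding mu_inf_def Fexp_def using fF by (simp add: nu_lim_const[OF ne] nu_i_zero)
  moreover have "mu_inf v I a G f = v c"
    unfolding mu_inf_def Fexp_def f_def using c by (simp add: nu_lim_const[OF ne] nu_i_const)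
  moreover have "v 0 = Pinf" "v c \<noteq> Pinf" using assms(1) c0 unfolding valuation_def by blast+
  ultimately have "mu_inf v I a F f \<noteq> mu_inf v I a G f" by simp
  then show ?thesis by metis
qed

end
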